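(* Let $F$ be an infinite field, $n\ge2$, and $g\in\mathbb{Z}_n\setminus\{0\}$. Let $\mathcal{B}_g=\{[z,a_1y_1,\dots,a_my_m]\mid m\ge1,\ a_i>0\}$ where $z$ is a fixed variable of degree $g$. Then: (i) if $f,h\in\mathcal{B}_g$ and $V_f\le V_h$, then $h\in\langle\{f\}\cup I\rangle_{T_{\mathbb{Z}_n}}$; (ii) $(\mathcal{B}_g,\le_{\mathcal{B}_g})$ has the finite basis property; (iii) for every $T_{\mathbb{Z}_n}$-ideal $J\supseteq I$, with $\mathcal{A}_g=J\cap\mathcal{B}_g$, there is a finite subset $\mathcal{A}'_g\subseteq\mathcal{A}_g$ with $\langle\mathcal{A}_g\cup I\rangle_{T_{\mathbb{Z}_n}}=\langle\mathcal{A}'_g\cup I\rangle_{T_{\mathbb{Z}_n}}$.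
   Context: $UT_n(F)^{(-)}$: $n\times n$ upper triangular matrices with bracket $[a,b]=ab-ba$ and canonical $\mathbb{Z}_n$-grading (degree-$k$ component spanned by $e_{ij}$ with $j-i=k$). $\mathcal{L}_{\mathbb{Z}_n}$ is the free Lie algebra on variables $y_1,y_2,\dots$ of degree $0$ and $z^{g}_1,z^g_2,\dots$ of degree $g$ for each $g\ne0$; $I$ is the $T_{\mathbb{Z}_n}$-ideal of graded identities of $UT_n(F)^{(-)}$; $\langle S\rangle_{T_{\mathbb{Z}_n}}$ is the smallest graded ideal containing $S$ invariant under degree-preserving endomorphisms. Commutators are left normed; $[z,a_1y_1,\dots,a_my_m]$ has $y_i$ repeated $a_i$ times. $V_f=(a_1,\dots,a_m)$, and $(a_1,\dots,a_m)\le(a'_1,\dots,a'_r)$ iff there is a strictly increasing $\varphi:\{1,\dots,m\}\to\{1,\dots,r\}$ with $a_i\le a'_{\varphi(i)}$; $f\le_{\mathcal{B}_g}h$ iff $V_f\le V_h$. Finite basis property: every infinite sequence has an infinite non-decreasing subsequence. *)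

theory Defs
  imports Main
begin

text \<open>Variables of the free graded Lie algebra: a pair (d, i) is the i-th variable
of Z_n-degree d (only d < n is used).  So y_i = (0, i) and z^g_i = (g, i), g \<noteq> 0.
The free Lie algebra is realised (Poincare-Birkhoff-Witt / Witt) as the Lie subalgebra
generated by the variables inside the free associative algebra F<X>, whose elements
are functions from words to F (with finite support).\<close>

type_synonym var = "nat \<times> nat"
type_synonym 'f ncpoly = "var list \<Rightarrow> 'f"

definition nc_one :: "'f::field ncpoly" where
  "nc_one w = (if w = [] then 1 else 0)"

definition nc_var :: "var \<Rightarrow> 'f::field ncpoly" where
  "nc_var x w = (if w = [x] then 1 else 0)"

definition nc_mult :: "'f::field ncpoly \<Rightarrow> 'f ncpoly \<Rightarrow> 'f ncpoly" where
  "nc_mult p q w = (\<Sum>i\<le>length w. p (take i w) * q (drop i w))"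

definition nc_br :: "'f::field ncpoly \<Rightarrow> 'f ncpoly \<Rightarrow> 'f ncpoly" where
  "nc_br p q = (\<lambda>w. nc_mult p q w - nc_mult q p w)"

inductive_set free_lie :: "nat \<Rightarrow> 'f::field ncpoly set" for n :: nat where
  var: "d < n \<Longrightarrow> nc_var (d, i) \<in> free_lie n"
| add: "p \<in> free_lie n \<Longrightarrow> q \<in> free_lie n \<Longrightarrow> (\<lambda>w. p w + q w) \<in> free_lie n"
| smult: "p \<in> free_lie n \<Longrightarrow> (\<lambda>w. c * p w) \<in> free_lie n"
| br: "p \<in> free_lie n \<Longrightarrow> q \<in> free_lie n \<Longrightarrow> nc_br p q \<in> free_lie n"

definition word_deg :: "nat \<Rightarrow> var list \<Rightarrow> nat" where
  "word_deg n w = (\<Sum>x\<leftarrow>w. fst x) mod n"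

definition homog :: "nat \<Rightarrow> nat \<Rightarrow> 'f::field ncpoly \<Rightarrow> bool" where
  "homog n d p \<longleftrightarrow> (\<forall>w. p w \<noteq> 0 \<longrightarrow> word_deg n w = d)"

definition hcomp :: "nat \<Rightarrow> nat \<Rightarrow> 'f::field ncpoly \<Rightarrow> 'f ncpoly" where
  "hcomp n d p w = (if word_deg n w = d then p w else 0)"

definition word_img :: "(var \<Rightarrow> 'f::field ncpoly) \<Rightarrow> var list \<Rightarrow> 'f ncpoly" where
  "word_img \<sigma> w = foldr (\<lambda>x acc. nc_mult (\<sigma> x) acc) w nc_one"

definition subst :: "(var \<Rightarrow> 'f::field ncpoly) \<Rightarrow> 'f ncpoly \<Rightarrow> 'f ncpoly" where
  "subst \<sigma> p u = (\<Sum>w\<in>{w. p w \<noteq> 0}. p w * word_img \<sigma> w u)"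

definition graded_endo :: "nat \<Rightarrow> (var \<Rightarrow> 'f::field ncpoly) \<Rightarrow> bool" where
  "graded_endo n \<sigma> \<longleftrightarrow> (\<forall>d i. d < n \<longrightarrow> \<sigma> (d, i) \<in> free_lie n \<and> homog n d (\<sigma> (d, i)))"

definition T_ideal :: "nat \<Rightarrow> 'f::field ncpoly set \<Rightarrow> bool" where
  "T_ideal n J \<longleftrightarrow> J \<subseteq> free_lie n \<and> (\<lambda>w. 0) \<in> J
     \<and> (\<forall>p\<in>J. \<forall>q\<in>J. (\<lambda>w. p w + q w) \<in> J)
     \<and> (\<forall>p\<in>J. \<forall>c. (\<lambda>w. c * p w) \<in> J)
     \<and> (\<forall>p\<in>J. \<forall>q\<in>free_lie n. nc_br p q \<in> J)
     \<and> (\<forall>p\<in>J. \<forall>d<n. hcomp n d p \<in> J)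
     \<and> (\<forall>p\<in>J. \<forall>\<sigma>. graded_endo n \<sigma> \<longrightarrow> subst \<sigma> p \<in> J)"

definition T_gen :: "nat \<Rightarrow> 'f::field ncpoly set \<Rightarrow> 'f ncpoly set" where
  "T_gen n S = \<Inter>{J. T_ideal n J \<and> S \<subseteq> J}"

definition mmult :: "nat \<Rightarrow> (nat \<Rightarrow> nat \<Rightarrow> 'f::field) \<Rightarrow> (nat \<Rightarrow> nat \<Rightarrow> 'f) \<Rightarrow> nat \<Rightarrow> nat \<Rightarrow> 'f" where
  "mmult n A B i j = (\<Sum>k<n. A i k * B k j)"

fun mprod :: "nat \<Rightarrow> (nat \<Rightarrow> nat \<Rightarrow> 'f::field) list \<Rightarrow> nat \<Rightarrow> nat \<Rightarrow> 'f" where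
  "mprod n [] = (\<lambda>i j. if i = j then 1 else 0)"
| "mprod n (A # As) = mmult n A (mprod n As)"

text \<open>Homogeneous element of degree d of UT_n with its canonical Z_n-grading:
in the span of the e_ij with j - i = d.\<close>
definition ut_homog :: "nat \<Rightarrow> nat \<Rightarrow> (nat \<Rightarrow> nat \<Rightarrow> 'f::field) \<Rightarrow> bool" where
  "ut_homog n d A \<longleftrightarrow> (\<forall>a<n. \<forall>b<n. A a b \<noteq> 0 \<longrightarrow> b = a + d)"

definition graded_eval_map :: "nat \<Rightarrow> (var \<Rightarrow> nat \<Rightarrow> nat \<Rightarrow> 'f::field) \<Rightarrow> bool" where
  "graded_eval_map n \<phi> \<longleftrightarrow> (\<forall>d i. d < n \<longrightarrow> ut_homog n d (\<phi> (d, i)))"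

text \<open>Evaluation in UT_n (the Lie bracket of UT_n^(-) is ab - ba, so evaluating the
associative image of a Lie polynomial gives its Lie evaluation).\<close>
definition ut_eval :: "nat \<Rightarrow> (var \<Rightarrow> nat \<Rightarrow> nat \<Rightarrow> 'f::field) \<Rightarrow> 'f ncpoly \<Rightarrow> nat \<Rightarrow> nat \<Rightarrow> 'f" where
  "ut_eval n \<phi> p a b = (\<Sum>w\<in>{w. p w \<noteq> 0}. p w * mprod n (map \<phi> w) a b)"

definition UT_ids :: "nat \<Rightarrow> 'f::field ncpoly set" where
  "UT_ids n = {p \<in> free_lie n. \<forall>\<phi>. graded_eval_map n \<phi> \<longrightarrow>
                 (\<forall>a<n. \<forall>b<n. ut_eval n \<phi> p a b = 0)}"

text \<open>Left-normed commutator [z, a_1 y_1, ..., a_m y_m], with y_i = (0, i) and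
the exponent vector given as the list [a_1, ..., a_m].\<close>
definition lnc :: "var \<Rightarrow> nat list \<Rightarrow> 'f::field ncpoly" where
  "lnc z as = foldl (\<lambda>p y. nc_br p (nc_var y)) (nc_var z)
     (concat (map (\<lambda>i. replicate (as ! i) (0, Suc i)) [0..<length as]))"

definition valid_exp :: "nat list \<Rightarrow> bool" where
  "valid_exp as \<longleftrightarrow> as \<noteq> [] \<and> (\<forall>a\<in>set as. 0 < a)"

definition B_set :: "var \<Rightarrow> 'f::field ncpoly set" where
  "B_set z = {lnc z as | as. valid_exp as}"

definition vle :: "nat list \<Rightarrow> nat list \<Rightarrow> bool" where
  "vle as bs \<longleftrightarrow> (\<exists>\<phi>. strict_mono_on {0..<length as} \<phi> \<and>
      (\<forall>i<length as. \<phi> i < length bs \<and> as ! i \<le> bs ! (\<phi> i)))"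

end

theory Submission
  imports Defs "HOL-Library.Multiset" "HOL-Library.Ramsey" "HOL-Library.Sublist"
begin

definition dl :: "var list \<Rightarrow> 'f::field ncpoly" where
  "dl u w = (if w = u then 1 else 0)"

lemma nc_var_dl: "nc_var x = dl [x]" by (auto simp: nc_var_def dl_def fun_eq_iff)
lemma nc_one_dl: "nc_one = dl []" by (auto simp: nc_one_def dl_def fun_eq_iff)

lemma take_drop_eq_iff:
  assumes "i \<le> length w"
  shows "(take i w = u \<and> drop i w = v) \<longleftrightarrow> (i = length u \<and> w = u @ v)"
proof
  assume h: "take i w = u \<and> drop i w = v"
  then have "w = u @ v" by (metis append_take_drop_id)
  moreover have "length u = i" using h assms by auto
  ultimately show "i = length u \<and> w = u @ v" by simp
qed auto

lemma nc_mult_dl: "nc_mult (dl u) (dl v) = (dl (u @ v) :: 'f::field ncpoly)"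
proof (rule ext)
  fix w :: "var list"
  have "nc_mult (dl u :: 'f ncpoly) (dl v) w = (\<Sum>i\<le>length w. (if i = length u \<and> w = u @ v then 1 else 0 :: 'f))"
    unfolding nc_mult_def dl_def
    by (rule sum.cong) (auto simp: take_drop_eq_iff[symmetric])
  also have "\<dots> = dl (u @ v) w"
    by (auto simp: dl_def)
  finally show "nc_mult (dl u) (dl v) w = (dl (u @ v) w :: 'f)" .
qed

lemma tri_swap:
  fixes G :: "nat \<Rightarrow> nat \<Rightarrow> 'a::comm_monoid_add"
  shows "(\<Sum>i\<le>N. \<Sum>j\<le>i. G i j) = (\<Sum>j\<le>N. \<Sum>i\<in>{j..N}. G i j)"
proof (induction N)
  case 0 then show ?case by simp
next
  case (Suc N)
  have e1: "(\<Sum>j\<le>Suc N. \<Sum>i\<in>{j..Suc N}. G i j) = (\<Sum>j\<le>N. \<Sum>i\<in>{j..Suc N}. G i j) + G (Suc N) (Suc N)"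
    by (simp only: sum.atMost_Suc) simp
  have e2: "(\<Sum>j\<le>N. \<Sum>i\<in>{j..Suc N}. G i j) = (\<Sum>j\<le>N. (\<Sum>i\<in>{j..N}. G i j) + G (Suc N) j)"
  proof (rule sum.cong)
    fix j assume "j \<in> {..N}"
    then have "{j..Suc N} = insert (Suc N) {j..N}" by auto
    then show "(\<Sum>i\<in>{j..Suc N}. G i j) = (\<Sum>i\<in>{j..N}. G i j) + G (Suc N) j"
      by (simp add: add.commute)
  qed simp
  have e3: "(\<Sum>i\<le>Suc N. \<Sum>j\<le>i. G i j) = (\<Sum>i\<le>N. \<Sum>j\<le>i. G i j) + (\<Sum>j\<le>N. G (Suc N) j) + G (Suc N) (Suc N)"
    by (simp only: sum.atMost_Suc add.assoc)
  show ?case unfolding e3 e1 e2 Suc sum.distrib ..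
qed

lemma nc_mult_assoc: "nc_mult (nc_mult p q) r = nc_mult p (nc_mult q (r :: 'f::field ncpoly))"
proof (rule ext)
  fix w :: "var list"
  define N where "N = length w"
  define G where "G i j = p (take j w) * q (take (i - j) (drop j w)) * r (drop i w)" for i j
  have "nc_mult (nc_mult p q) r w = (\<Sum>i\<le>N. \<Sum>j\<le>i. G i j)"
  proof -
    have "nc_mult (nc_mult p q) r w = (\<Sum>i\<le>N. nc_mult p q (take i w) * r (drop i w))"
      by (simp add: nc_mult_def N_def)
    also have "\<dots> = (\<Sum>i\<le>N. \<Sum>j\<le>i. G i j)"
    proof (rule sum.cong)
      fix i assume i: "i \<in> {..N}"
      then have li: "length (take i w) = i" by (simp add: N_def)
      have "nc_mult p q (take i w) * r (drop i w) = (\<Sum>j\<le>i. p (take j (take i w)) * q (drop j (take i w)) * r (drop i w))"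
        by (simp only: nc_mult_def li sum_distrib_right)
      also have "\<dots> = (\<Sum>j\<le>i. G i j)"
      proof (rule sum.cong)
        fix j assume "j \<in> {..i}"
        then have "take j (take i w) = take j w" "drop j (take i w) = take (i - j) (drop j w)"
          by (simp_all add: min_def drop_take)
        then show "p (take j (take i w)) * q (drop j (take i w)) * r (drop i w) = G i j"
          by (simp add: G_def)
      qed simp
      finally show "nc_mult p q (take i w) * r (drop i w) = (\<Sum>j\<le>i. G i j)" .
    qed simp
    finally show ?thesis .
  qed
  also have "\<dots> = (\<Sum>j\<le>N. \<Sum>i\<in>{j..N}. G i j)" by (rule tri_swap)
  also have "\<dots> = (\<Sum>j\<le>N. \<Sum>k\<le>N - j. G (k + j) j)"
  proof (rule sum.cong)
    fix j assume "j \<in> {..N}"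
    then have "{j..N} = {0 + j..(N - j) + j}" by auto
    then show "(\<Sum>i\<in>{j..N}. G i j) = (\<Sum>k\<le>N - j. G (k + j) j)"
      by (simp only: sum.shift_bounds_cl_nat_ivl atLeast0AtMost)
  qed simp
  also have "\<dots> = nc_mult p (nc_mult q r) w"
  proof -
    have "nc_mult p (nc_mult q r) w = (\<Sum>j\<le>N. p (take j w) * nc_mult q r (drop j w))"
      by (simp add: nc_mult_def N_def)
    also have "\<dots> = (\<Sum>j\<le>N. \<Sum>k\<le>N - j. G (k + j) j)"
    proof (rule sum.cong)
      fix j assume j: "j \<in> {..N}"
      then have lj: "length (drop j w) = N - j" by (simp add: N_def)
      have "p (take j w) * nc_mult q r (drop j w) = (\<Sum>k\<le>N - j. p (take j w) * (q (take k (drop j w)) * r (drop k (drop j w))))"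
        by (simp only: nc_mult_def lj sum_distrib_left)
      also have "\<dots> = (\<Sum>k\<le>N - j. G (k + j) j)"
      proof (rule sum.cong)
        fix k assume "k \<in> {..N - j}"
        have "drop k (drop j w) = drop (k + j) w" by (simp add: add.commute)
        then show "p (take j w) * (q (take k (drop j w)) * r (drop k (drop j w))) = G (k + j) j"
          by (simp add: G_def mult.assoc)
      qed simp
      finally show "p (take j w) * nc_mult q r (drop j w) = (\<Sum>k\<le>N - j. G (k + j) j)" .
    qed simp
    finally show ?thesis by (rule sym)
  qed
  finally show "nc_mult (nc_mult p q) r w = nc_mult p (nc_mult q r) w" .
qed


lemma nc_mult_add_left: "nc_mult (\<lambda>w. p w + q w) r = (\<lambda>w. nc_mult p r w + nc_mult q r w)"
  by (auto simp: nc_mult_def fun_eq_iff distrib_right sum.distrib)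
lemma nc_mult_diff_left: "nc_mult (\<lambda>w. p w - q w) r = (\<lambda>w. nc_mult p r w - nc_mult q r w)"
  by (auto simp: nc_mult_def fun_eq_iff left_diff_distrib sum_subtractf)
lemma nc_mult_smult_left: "nc_mult (\<lambda>w. c * p w) r = (\<lambda>w. c * nc_mult p r w)"
  by (auto simp: nc_mult_def fun_eq_iff sum_distrib_left mult.assoc)
lemma nc_mult_add_right: "nc_mult r (\<lambda>w. p w + q w) = (\<lambda>w. nc_mult r p w + nc_mult r q w)"
  by (auto simp: nc_mult_def fun_eq_iff distrib_left sum.distrib)
lemma nc_mult_diff_right: "nc_mult r (\<lambda>w. p w - q w) = (\<lambda>w. nc_mult r p w - nc_mult r q w)"
  by (auto simp: nc_mult_def fun_eq_iff right_diff_distrib sum_subtractf)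
lemma nc_mult_smult_right: "nc_mult r (\<lambda>w. c * p w) = (\<lambda>w. c * nc_mult r p w)"
  by (auto simp: nc_mult_def fun_eq_iff sum_distrib_left mult.left_commute)

lemmas nc_mult_lin = nc_mult_add_left nc_mult_diff_left nc_mult_smult_left
  nc_mult_add_right nc_mult_diff_right nc_mult_smult_right

lemma nc_br_diff_left: "nc_br (\<lambda>w. p w - q w) r = (\<lambda>w. nc_br p r w - nc_br q r w)"
  by (simp add: nc_br_def nc_mult_lin fun_eq_iff)

lemma jacobi:
  "(\<lambda>w. nc_br (nc_br p a) b w - nc_br (nc_br p b) a w) = nc_br p (nc_br a (b :: 'f::field ncpoly))"
  unfolding nc_br_def
  apply (simp only: nc_mult_lin nc_mult_assoc fun_eq_iff)
  by algebra

lemma nc_br_swap: "nc_br q p = (\<lambda>w. (-1) * nc_br p q (w :: var list) :: 'f::field)"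
  by (simp add: nc_br_def fun_eq_iff)

definition supp :: "'f::field ncpoly \<Rightarrow> var list set" where
  "supp p = {w. p w \<noteq> 0}"

lemma supp_mult: "supp (nc_mult p q) \<subseteq> (\<lambda>(a,b). a @ b) ` (supp p \<times> supp q)"
proof
  fix w assume "w \<in> supp (nc_mult p q)"
  then have "(\<Sum>i\<le>length w. p (take i w) * q (drop i w)) \<noteq> 0"
    by (simp add: supp_def nc_mult_def)
  then obtain i where "p (take i w) * q (drop i w) \<noteq> 0"
    by (metis (no_types, lifting) sum.neutral)
  then show "w \<in> (\<lambda>(a,b). a @ b) ` (supp p \<times> supp q)"
  proof -
    have "(take i w, drop i w) \<in> supp p \<times> supp q" using \<open>p (take i w) * q (drop i w) \<noteq> 0\<close>
      by (simp add: supp_def)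
    moreover have "w = (\<lambda>(a,b). a @ b) (take i w, drop i w)" by simp
    ultimately show ?thesis by (rule rev_image_eqI)
  qed
qed

lemma fin_supp_mult: "finite (supp p) \<Longrightarrow> finite (supp q) \<Longrightarrow> finite (supp (nc_mult p q))"
  by (rule finite_subset[OF supp_mult]) auto

lemma fin_supp_add: "finite (supp p) \<Longrightarrow> finite (supp q) \<Longrightarrow> finite (supp (\<lambda>w. p w + q w))"
  by (rule finite_subset[of _ "supp p \<union> supp q"]) (auto simp: supp_def)
lemma fin_supp_diff: "finite (supp p) \<Longrightarrow> finite (supp q) \<Longrightarrow> finite (supp (\<lambda>w. p w - q w))"
  by (rule finite_subset[of _ "supp p \<union> supp q"]) (auto simp: supp_def)
lemma fin_supp_smult: "finite (supp p) \<Longrightarrow> finite (supp (\<lambda>w. c * p w))"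
  by (rule finite_subset[of _ "supp p"]) (auto simp: supp_def)
lemma fin_supp_br: "finite (supp p) \<Longrightarrow> finite (supp q) \<Longrightarrow> finite (supp (nc_br p q))"
  unfolding nc_br_def by (intro fin_supp_diff fin_supp_mult)
lemma fin_supp_dl: "finite (supp (dl u))"
  by (rule finite_subset[of _ "{u}"]) (auto simp: supp_def dl_def)
lemma fin_supp_var: "finite (supp (nc_var x))"
  by (simp add: nc_var_dl fin_supp_dl)

lemma free_lie_fin: "p \<in> free_lie n \<Longrightarrow> finite (supp p)"
  by (induction rule: free_lie.induct) (auto intro: fin_supp_add fin_supp_smult fin_supp_br fin_supp_var)

definition cg :: "'f::field ncpoly set \<Rightarrow> 'f ncpoly \<Rightarrow> 'f ncpoly \<Rightarrow> bool" where
  "cg J p q \<longleftrightarrow> (\<lambda>w. p w - q w) \<in> J"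

definition F :: "'f::field ncpoly \<Rightarrow> var list \<Rightarrow> 'f ncpoly" where
  "F P ys = foldl (\<lambda>p y. nc_br p (nc_var y)) P ys"

lemma F_simps[simp]: "F P [] = P" "F P (y # ys) = F (nc_br P (nc_var y)) ys"
  "F P (xs @ ys) = F (F P xs) ys"
  by (simp_all add: F_def)

context
  fixes n :: nat and J :: "'f::field ncpoly set"
  assumes TJ: "T_ideal n J"
begin

lemma J_add: "p \<in> J \<Longrightarrow> q \<in> J \<Longrightarrow> (\<lambda>w. p w + q w) \<in> J"
  using TJ by (simp add: T_ideal_def)
lemma J_smult: "p \<in> J \<Longrightarrow> (\<lambda>w. c * p w) \<in> J"
  using TJ by (simp add: T_ideal_def)
lemma J_br: "p \<in> J \<Longrightarrow> q \<in> free_lie n \<Longrightarrow> nc_br p q \<in> J"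
  using TJ by (simp add: T_ideal_def)
lemma J_brl: "p \<in> J \<Longrightarrow> q \<in> free_lie n \<Longrightarrow> nc_br q p \<in> J"
  by (subst nc_br_swap) (intro J_smult J_br)
lemma J_zero: "(\<lambda>w. 0) \<in> J"
  using TJ by (simp add: T_ideal_def)

lemma cg_refl: "cg J p p"
  using J_zero by (simp add: cg_def)
lemma cg_sym: "cg J p q \<Longrightarrow> cg J q p"
  unfolding cg_def using J_smult[of "\<lambda>w. p w - q w" "-1"] by simp
lemma cg_trans: "cg J p q \<Longrightarrow> cg J q r \<Longrightarrow> cg J p r"
  unfolding cg_def using J_add[of "\<lambda>w. p w - q w" "\<lambda>w. q w - r w"] by simp
lemma cg_in: "cg J p q \<Longrightarrow> q \<in> J \<Longrightarrow> p \<in> J"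
  unfolding cg_def using J_add[of "\<lambda>w. p w - q w" q] by simp
lemma cg_br: "cg J p q \<Longrightarrow> y \<in> free_lie n \<Longrightarrow> cg J (nc_br p y) (nc_br q y)"
  unfolding cg_def using J_br[of "\<lambda>w. p w - q w" y] by (simp add: nc_br_diff_left)

lemma F_free: "P \<in> free_lie n \<Longrightarrow> \<forall>y\<in>set ys. fst y < n \<Longrightarrow> F P ys \<in> free_lie n"
proof (induction ys arbitrary: P)
  case (Cons y ys)
  have "nc_var y \<in> free_lie n" using Cons.prems by (cases y) (auto intro: free_lie.var)
  then show ?case using Cons by (auto intro: free_lie.br)
qed simp

lemma F_J: "P \<in> J \<Longrightarrow> \<forall>y\<in>set ys. fst y < n \<Longrightarrow> F P ys \<in> J"
proof (induction ys arbitrary: P)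
  case (Cons y ys)
  have "nc_var y \<in> free_lie n" using Cons.prems by (cases y) (auto intro: free_lie.var)
  then show ?case using Cons by (auto intro: J_br)
qed simp

lemma F_cg: "cg J P Q \<Longrightarrow> \<forall>y\<in>set ys. fst y < n \<Longrightarrow> cg J (F P ys) (F Q ys)"
proof (induction ys arbitrary: P Q)
  case (Cons y ys)
  have "nc_var y \<in> free_lie n" using Cons.prems by (cases y) (auto intro: free_lie.var)
  then show ?case using Cons by (auto intro: cg_br)
qed simp

context
  assumes H: "\<And>a b. fst a = 0 \<Longrightarrow> fst b = 0 \<Longrightarrow> nc_br (nc_var a) (nc_var b) \<in> J"
    and n0: "0 < n"
begin

lemma var0: "fst y = 0 \<Longrightarrow> nc_var y \<in> free_lie n"
  using n0 by (cases y) (auto intro: free_lie.var)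

lemma swap2: "P \<in> free_lie n \<Longrightarrow> fst a = 0 \<Longrightarrow> fst b = 0 \<Longrightarrow>
   cg J (nc_br (nc_br P (nc_var a)) (nc_var b)) (nc_br (nc_br P (nc_var b)) (nc_var a))"
  unfolding cg_def jacobi using H J_brl by blast

lemma F_move: "P \<in> free_lie n \<Longrightarrow> \<forall>y\<in>set (x # l1 @ l2). fst y = 0 \<Longrightarrow>
    cg J (F P (l1 @ x # l2)) (F P (x # l1 @ l2))"
proof (induction l1 arbitrary: P)
  case Nil then show ?case by (simp add: cg_refl)
next
  case (Cons c l1)
  have Pc: "nc_br P (nc_var c) \<in> free_lie n" using Cons.prems by (auto intro: free_lie.br var0)
  have fl: "\<forall>y\<in>set (l1 @ l2). fst y < n" using Cons.prems n0 by auto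
  have 1: "cg J (F P ((c # l1) @ x # l2)) (F (nc_br P (nc_var c)) (x # l1 @ l2))"
    using Cons.IH[OF Pc] Cons.prems by simp
  have 2: "cg J (F (nc_br P (nc_var c)) (x # l1 @ l2)) (F P (x # (c # l1) @ l2))"
    using F_cg[OF swap2[of P c x] fl] Cons.prems by simp
  show ?case using cg_trans[OF 1 2] .
qed

lemma F_perm: "P \<in> free_lie n \<Longrightarrow> mset xs = mset xs' \<Longrightarrow> \<forall>y\<in>set xs. fst y = 0 \<Longrightarrow>
    cg J (F P xs) (F P xs')"
proof (induction xs arbitrary: P xs')
  case Nil
  then have "xs' = []" by simp
  then show ?case by (simp add: cg_refl)
next
  case (Cons x xs)
  have "x \<in> set xs'" using Cons.prems(2) by (metis list.set_intros(1) set_mset_mset)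
  then obtain l1 l2 where xs': "xs' = l1 @ x # l2" by (meson split_list)
  have m: "mset xs = mset (l1 @ l2)" using Cons.prems(2) xs' by simp
  have Px: "nc_br P (nc_var x) \<in> free_lie n" using Cons.prems by (auto intro: free_lie.br var0)
  have 1: "cg J (F P (x # xs)) (F P (x # l1 @ l2))"
    using Cons.IH[OF Px m] Cons.prems by (simp del: F_simps(3))
  have s: "set xs' = set (x # xs)" using Cons.prems(2) by (metis set_mset_mset)
  have fm: "\<forall>y\<in>set (x # l1 @ l2). fst y = 0" using Cons.prems(3) s xs' by auto
  have 2: "cg J (F P (x # l1 @ l2)) (F P xs')"
    unfolding xs' by (rule cg_sym[OF F_move[OF Cons.prems(1) fm]])
  show ?case using cg_trans[OF 1 2] .
qed

end
end

lemma mprod2: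
  assumes "ut_homog n 0 A" "ut_homog n 0 B" "x < n" "y < n"
  shows "mprod n [A, B] x y = (if x = y then A x x * B x x else (0::'f::field))"
proof -
  have "mprod n [A, B] x y = (\<Sum>k<n. A x k * B k y)"
    using assms(4) by (simp add: mmult_def if_distrib cong: if_cong)
  also have "\<dots> = (\<Sum>k<n. if k = x then A x x * B x y else 0)"
    using assms by (intro sum.cong) (auto simp: ut_homog_def)
  also have "\<dots> = A x x * B x y" using assms(3) by simp
  also have "\<dots> = (if x = y then A x x * B x x else 0)"
    using assms by (auto simp: ut_homog_def)
  finally show ?thesis .
qed

lemma comm_in_UT0:
  assumes n0: "0 < n"
  shows "nc_br (nc_var (0, i)) (nc_var (0, j)) \<in> (UT_ids n :: 'f::field ncpoly set)"
proof -
  define a where "a = (0::nat, i)"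
  define b where "b = (0::nat, j)"
  define p :: "'f ncpoly" where "p = nc_br (nc_var a) (nc_var b)"
  have pf: "p \<in> free_lie n" unfolding p_def a_def b_def using n0
    by (intro free_lie.br free_lie.var)
  have pe: "p = (\<lambda>w. dl [a, b] w - dl [b, a] w)"
    unfolding p_def nc_br_def nc_var_dl nc_mult_dl by simp
  have sp: "{w. p w \<noteq> 0} \<subseteq> {[a,b],[b,a]}"
  proof
    fix w assume h: "w \<in> {w. p w \<noteq> 0}"
    show "w \<in> {[a,b],[b,a]}"
    proof (rule ccontr)
      assume "w \<notin> {[a,b],[b,a]}"
      then have "w \<noteq> [a,b]" "w \<noteq> [b,a]" by blast+
      then show False using h by (simp add: pe dl_def)
    qed
  qed
  have s0: "(\<Sum>w\<in>{[a,b],[b,a]}. p w) = 0"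
  proof (cases "a = b")
    case True then show ?thesis by (simp add: pe)
  next
    case False then show ?thesis by (simp add: pe dl_def)
  qed
  have "ut_eval n \<phi> p x y = 0" if ge: "graded_eval_map n \<phi>" and xy: "x < n" "y < n" for \<phi> x y
  proof -
    have hA: "ut_homog n 0 (\<phi> a)" "ut_homog n 0 (\<phi> b)"
      using ge n0 unfolding graded_eval_map_def a_def b_def by blast+
    define c where "c = (if x = y then \<phi> a x x * \<phi> b x x else (0::'f))"
    have m: "mprod n (map \<phi> w) x y = c" if "w \<in> {[a,b],[b,a]}" for w
    proof -
      have "w = [a,b] \<or> w = [b,a]" using that by simp
      then show ?thesis
        using mprod2[OF hA xy] mprod2[OF hA(2) hA(1) xy] by (auto simp: c_def mult.commute)
    qed
    have "ut_eval n \<phi> p x y = (\<Sum>w\<in>{w. p w \<noteq> 0}. p w * c)"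
      unfolding ut_eval_def
    proof (rule sum.cong)
      fix w assume "w \<in> {w. p w \<noteq> 0}"
      then have "w \<in> {[a,b],[b,a]}" using sp by blast
      then show "p w * mprod n (map \<phi> w) x y = p w * c" using m by simp
    qed simp
    also have "\<dots> = (\<Sum>w\<in>{w. p w \<noteq> 0}. p w) * c" by (simp add: sum_distrib_right)
    also have "(\<Sum>w\<in>{w. p w \<noteq> 0}. p w) = (\<Sum>w\<in>{[a,b],[b,a]}. p w)"
      by (rule sum.mono_neutral_left) (use sp in blast)+
    finally show ?thesis using s0 by simp
  qed
  then show ?thesis using pf unfolding UT_ids_def p_def a_def b_def by blast
qed

lemma comm_in_UT:
  assumes "0 < n" "fst a = 0" "fst b = 0"
  shows "nc_br (nc_var a) (nc_var b) \<in> (UT_ids n :: 'f::field ncpoly set)"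
  using comm_in_UT0[OF assms(1), of "snd a" "snd b"] assms(2,3)
  by (metis prod.collapse)

definition R :: "(var \<Rightarrow> var) \<Rightarrow> 'f::field ncpoly \<Rightarrow> 'f ncpoly" where
  "R \<tau> p u = sum p {w. p w \<noteq> 0 \<and> map \<tau> w = u}"

lemma word_img_ren: "word_img (\<lambda>x. nc_var (\<tau> x)) w = (dl (map \<tau> w) :: 'f::field ncpoly)"
  by (induction w) (simp_all add: word_img_def nc_one_dl nc_var_dl nc_mult_dl)

lemma subst_ren:
  assumes "finite (supp p)"
  shows "subst (\<lambda>x. nc_var (\<tau> x)) p = R \<tau> (p :: 'f::field ncpoly)"
proof (rule ext)
  fix u
  have fin: "finite {w. p w \<noteq> 0}" using assms by (simp add: supp_def)
  have "subst (\<lambda>x. nc_var (\<tau> x)) p u = (\<Sum>w\<in>{w. p w \<noteq> 0}. if map \<tau> w = u then p w else 0)"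
    unfolding subst_def word_img_ren by (intro sum.cong) (auto simp: dl_def)
  also have "\<dots> = sum p {w \<in> {w. p w \<noteq> 0}. map \<tau> w = u}"
    by (rule sum.inter_filter[OF fin, symmetric])
  also have "{w \<in> {w. p w \<noteq> 0}. map \<tau> w = u} = {w. p w \<noteq> 0 \<and> map \<tau> w = u}" by auto
  also have "sum p {w. p w \<noteq> 0 \<and> map \<tau> w = u} = R \<tau> p u" by (simp add: R_def)
  finally show "subst (\<lambda>x. nc_var (\<tau> x)) p u = R \<tau> p u" .
qed

lemma R_alt:
  assumes "finite S" "supp p \<subseteq> S"
  shows "R \<tau> p u = sum p {w \<in> S. map \<tau> w = u}"
  unfolding R_def
  by (rule sum.mono_neutral_left) (use assms in \<open>auto simp: supp_def\<close>)

lemma R_diff: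
  assumes "finite (supp p)" "finite (supp q)"
  shows "R \<tau> (\<lambda>w. p w - q w) = (\<lambda>u. R \<tau> p u - R \<tau> (q :: 'f::field ncpoly) u)"
proof (rule ext)
  fix u
  let ?S = "supp p \<union> supp q"
  have f: "finite ?S" using assms by simp
  have "R \<tau> (\<lambda>w. p w - q w) u = sum (\<lambda>w. p w - q w) {w \<in> ?S. map \<tau> w = u}"
    by (rule R_alt[OF f]) (auto simp: supp_def)
  also have "\<dots> = sum p {w \<in> ?S. map \<tau> w = u} - sum q {w \<in> ?S. map \<tau> w = u}"
    by (simp add: sum_subtractf)
  also have "\<dots> = R \<tau> p u - R \<tau> q u"
    using R_alt[OF f, of p \<tau> u] R_alt[OF f, of q \<tau> u] by auto
  finally show "R \<tau> (\<lambda>w. p w - q w) u = R \<tau> p u - R \<tau> q u" .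
qed

lemma drop_single:
  assumes "i \<le> length u"
  shows "drop i u = [y] \<longleftrightarrow> (u \<noteq> [] \<and> i = length u - 1 \<and> last u = y)"
proof
  assume h: "drop i u = [y]"
  have l: "length u - i = 1" using arg_cong[OF h, of length] by simp
  then have il: "i < length u" by simp
  have "last (drop i u) = last u" using il by (rule last_drop)
  then have "last u = y" using h by simp
  then show "u \<noteq> [] \<and> i = length u - 1 \<and> last u = y" using l il by auto
next
  assume h: "u \<noteq> [] \<and> i = length u - 1 \<and> last u = y"
  then have u: "u = butlast u @ [y]" by (metis append_butlast_last_id)
  have "i = length (butlast u)" using h by simp
  then have "drop i u = drop (length (butlast u)) (butlast u @ [y])" using u by metis
  then show "drop i u = [y]" by simp
qed

lemma take_single:
  assumes "i \<le> length u"
  shows "take i u = [y] \<longleftrightarrow> (u \<noteq> [] \<and> i = 1 \<and> hd u = y)"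
  using assms by (cases u; cases i) auto

lemma rmul_var: "nc_mult p (nc_var y) u = (if u \<noteq> [] \<and> last u = y then p (butlast u) else (0::'f::field))"
proof -
  have "nc_mult p (nc_var y) u = (\<Sum>i\<le>length u. if i = length u - 1 then
          (if u \<noteq> [] \<and> last u = y then p (butlast u) else 0) else 0)"
    unfolding nc_mult_def nc_var_def
    by (intro sum.cong) (auto simp: drop_single butlast_conv_take)
  then show ?thesis by simp
qed

lemma lmul_var: "nc_mult (nc_var y) p u = (if u \<noteq> [] \<and> hd u = y then p (tl u) else (0::'f::field))"
proof -
  have "nc_mult (nc_var y) p u = (\<Sum>i\<le>length u. if i = 1 then
          (if u \<noteq> [] \<and> hd u = y then p (tl u) else 0) else 0)"
    unfolding nc_mult_def nc_var_def
    by (intro sum.cong) (auto simp: take_single drop_Suc)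
  also have "\<dots> = (if 1 \<le> length u then (if u \<noteq> [] \<and> hd u = y then p (tl u) else 0) else 0)"
    by (simp add: sum.delta)
  also have "\<dots> = (if u \<noteq> [] \<and> hd u = y then p (tl u) else 0)"
    by (cases u) simp_all
  finally show ?thesis .
qed

lemma R_rmul: "R \<tau> (nc_mult p (nc_var y)) = nc_mult (R \<tau> p) (nc_var (\<tau> y) :: 'f::field ncpoly)"
proof (rule ext)
  fix u
  let ?q = "nc_mult p (nc_var y) :: 'f ncpoly"
  show "R \<tau> ?q u = nc_mult (R \<tau> p) (nc_var (\<tau> y)) u"
  proof (cases "u \<noteq> [] \<and> last u = \<tau> y")
    case True
    have set: "{w. ?q w \<noteq> 0 \<and> map \<tau> w = u} = (\<lambda>v. v @ [y]) ` {v. p v \<noteq> 0 \<and> map \<tau> v = butlast u}"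
    proof (intro equalityI subsetI)
      fix w assume "w \<in> {w. ?q w \<noteq> 0 \<and> map \<tau> w = u}"
      then have w: "w \<noteq> []" "last w = y" "p (butlast w) \<noteq> 0" "map \<tau> w = u"
        by (auto simp: rmul_var split: if_splits)
      then have "w = butlast w @ [y]" by (metis append_butlast_last_id)
      moreover have "map \<tau> (butlast w) = butlast u" using w by (simp add: map_butlast)
      ultimately show "w \<in> (\<lambda>v. v @ [y]) ` {v. p v \<noteq> 0 \<and> map \<tau> v = butlast u}"
        using w by (auto intro: image_eqI[of _ _ "butlast w"])
    next
      fix w assume "w \<in> (\<lambda>v. v @ [y]) ` {v. p v \<noteq> 0 \<and> map \<tau> v = butlast u}"
      then obtain v where v: "w = v @ [y]" "p v \<noteq> 0" "map \<tau> v = butlast u" by auto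
      then have "map \<tau> w = butlast u @ [last u]" using True by simp
      then have "map \<tau> w = u" using True by (metis append_butlast_last_id)
      then show "w \<in> {w. ?q w \<noteq> 0 \<and> map \<tau> w = u}" using v by (simp add: rmul_var)
    qed
    have "R \<tau> ?q u = sum ?q ((\<lambda>v. v @ [y]) ` {v. p v \<noteq> 0 \<and> map \<tau> v = butlast u})"
      unfolding R_def set ..
    also have "\<dots> = sum (\<lambda>v. ?q (v @ [y])) {v. p v \<noteq> 0 \<and> map \<tau> v = butlast u}"
      by (subst sum.reindex) (auto simp: inj_on_def comp_def)
    also have "\<dots> = R \<tau> p (butlast u)" by (simp add: R_def rmul_var)
    finally show ?thesis using True by (simp add: rmul_var)
  next
    case False
    have "{w. ?q w \<noteq> 0 \<and> map \<tau> w = u} = {}"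
      using False by (auto simp: rmul_var last_map split: if_splits)
    then have "R \<tau> ?q u = 0" by (simp only: R_def sum.empty)
    then show ?thesis using False by (auto simp: rmul_var)
  qed
qed

lemma R_lmul: "R \<tau> (nc_mult (nc_var y) p) = nc_mult (nc_var (\<tau> y)) (R \<tau> p :: 'f::field ncpoly)"
proof (rule ext)
  fix u
  let ?q = "nc_mult (nc_var y) p :: 'f ncpoly"
  show "R \<tau> ?q u = nc_mult (nc_var (\<tau> y)) (R \<tau> p) u"
  proof (cases "u \<noteq> [] \<and> hd u = \<tau> y")
    case True
    have set: "{w. ?q w \<noteq> 0 \<and> map \<tau> w = u} = (\<lambda>v. y # v) ` {v. p v \<noteq> 0 \<and> map \<tau> v = tl u}"
    proof (intro equalityI subsetI)
      fix w assume "w \<in> {w. ?q w \<noteq> 0 \<and> map \<tau> w = u}"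
      then have w: "w \<noteq> []" "hd w = y" "p (tl w) \<noteq> 0" "map \<tau> w = u"
        by (auto simp: lmul_var split: if_splits)
      then have "w = y # tl w" by (metis list.collapse)
      moreover have "map \<tau> (tl w) = tl u" using w by (simp add: map_tl)
      ultimately show "w \<in> (\<lambda>v. y # v) ` {v. p v \<noteq> 0 \<and> map \<tau> v = tl u}"
        using w by (auto intro: image_eqI[of _ _ "tl w"])
    next
      fix w assume "w \<in> (\<lambda>v. y # v) ` {v. p v \<noteq> 0 \<and> map \<tau> v = tl u}"
      then obtain v where v: "w = y # v" "p v \<noteq> 0" "map \<tau> v = tl u" by auto
      then have "map \<tau> w = u" using True by (cases u) auto
      then show "w \<in> {w. ?q w \<noteq> 0 \<and> map \<tau> w = u}" using v by (simp add: lmul_var)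
    qed
    have "R \<tau> ?q u = sum ?q ((\<lambda>v. y # v) ` {v. p v \<noteq> 0 \<and> map \<tau> v = tl u})"
      unfolding R_def set ..
    also have "\<dots> = sum (\<lambda>v. ?q (y # v)) {v. p v \<noteq> 0 \<and> map \<tau> v = tl u}"
      by (subst sum.reindex) (auto simp: inj_on_def comp_def)
    also have "\<dots> = R \<tau> p (tl u)" by (simp add: R_def lmul_var)
    finally show ?thesis using True by (simp add: lmul_var)
  next
    case False
    have "{w. ?q w \<noteq> 0 \<and> map \<tau> w = u} = {}"
      using False by (auto simp: lmul_var hd_map split: if_splits)
    then have "R \<tau> ?q u = 0" by (simp only: R_def sum.empty)
    then show ?thesis using False by (auto simp: lmul_var)
  qed
qed

lemma R_br_var:
  assumes "finite (supp p)"
  shows "R \<tau> (nc_br p (nc_var y)) = nc_br (R \<tau> p) (nc_var (\<tau> y) :: 'f::field ncpoly)"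
  unfolding nc_br_def
  by (subst R_diff) (auto intro: fin_supp_mult fin_supp_var assms simp: R_rmul R_lmul)

lemma R_var: "R \<tau> (nc_var z) = (nc_var (\<tau> z) :: 'f::field ncpoly)"
proof (rule ext)
  fix u
  have e: "{w. (nc_var z :: 'f ncpoly) w \<noteq> 0 \<and> map \<tau> w = u} = {w. w = [z] \<and> [\<tau> z] = u}"
  proof (rule Collect_cong)
    fix w
    show "((nc_var z :: 'f ncpoly) w \<noteq> 0 \<and> map \<tau> w = u) = (w = [z] \<and> [\<tau> z] = u)"
      unfolding nc_var_def by (cases "w = [z]") simp_all
  qed
  show "R \<tau> (nc_var z) u = (nc_var (\<tau> z) u :: 'f)"
  proof (cases "[\<tau> z] = u")
    case True
    then have "{w. w = [z] \<and> [\<tau> z] = u} = {[z]}" by blast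
    then show ?thesis unfolding R_def e using True by (simp add: nc_var_def)
  next
    case False
    then have "{w. w = [z] \<and> [\<tau> z] = u} = {}" by blast
    then show ?thesis unfolding R_def e using False by (simp add: nc_var_def)
  qed
qed

lemma fin_F: "finite (supp P) \<Longrightarrow> finite (supp (F P ys))"
  by (induction ys arbitrary: P) (auto intro: fin_supp_br fin_supp_var)

lemma R_F: "finite (supp P) \<Longrightarrow> R \<tau> (F P ys) = F (R \<tau> P) (map \<tau> ys :: var list) "
proof (induction ys arbitrary: P)
  case (Cons y ys)
  have "finite (supp (nc_br P (nc_var y)))" by (intro fin_supp_br fin_supp_var Cons.prems)
  then show ?case by (simp add: Cons.IH R_br_var Cons.prems)
qed simp

definition ysq :: "nat list \<Rightarrow> var list" where
  "ysq as = concat (map (\<lambda>i. replicate (as ! i) (0, Suc i)) [0..<length as])"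

lemma lnc_F: "lnc z as = F (nc_var z) (ysq as)"
  by (simp add: lnc_def F_def ysq_def)

lemma ysq_fst: "y \<in> set (ysq as) \<Longrightarrow> fst y = 0"
  by (auto simp: ysq_def)

lemma count_cr: "count (mset (concat (map (\<lambda>i. replicate (c i) (f i)) [0..<m]))) x
   = (\<Sum>i<m. if f i = x then c i else 0)"
  by (induction m) (auto simp: count_mset)

lemma part1_J:
  fixes n g zi :: nat and J :: "'f::field ncpoly set"
  assumes n0: "0 < n" and g0: "0 < g" and gn: "g < n"
    and TJ: "T_ideal n J" and IJ: "UT_ids n \<subseteq> J"
    and va: "valid_exp as" and vb: "valid_exp bs" and le: "vle as bs"
    and fJ: "lnc (g, zi) as \<in> J"
  shows "lnc (g, zi) bs \<in> J"
proof -
  define m where "m = length as"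
  obtain \<phi> where smo: "strict_mono_on {0..<m} \<phi>"
    and \<phi>: "\<And>i. i < m \<Longrightarrow> \<phi> i < length bs \<and> as ! i \<le> bs ! (\<phi> i)"
    using le unfolding vle_def m_def by blast
  have inj: "inj_on \<phi> {0..<m}" using smo by (rule strict_mono_on_imp_inj_on)
  define \<tau> where "\<tau> x = (if fst x = 0 \<and> 0 < snd x \<and> snd x - 1 < m then (0, Suc (\<phi> (snd x - 1))) else x)"
    for x :: var
  have \<tau>fst: "fst (\<tau> x) = fst x" for x by (simp add: \<tau>_def)
  define \<sigma> where "\<sigma> x = (nc_var (\<tau> x) :: 'f ncpoly)" for x
  have ge: "graded_endo n \<sigma>"
    unfolding graded_endo_def
  proof (intro allI impI conjI)
    fix d i assume d: "d < n"
    obtain a b where ab: "\<tau> (d, i) = (a, b)" by force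
    have "a = d" using \<tau>fst[of "(d,i)"] ab by simp
    then show "\<sigma> (d, i) \<in> free_lie n" "homog n d (\<sigma> (d, i))"
      using d ab by (auto simp: \<sigma>_def homog_def nc_var_def word_deg_def intro: free_lie.var split: if_splits)
  qed
  have z: "nc_var (g, zi) \<in> free_lie n" using gn by (rule free_lie.var)
  have finz: "finite (supp (nc_var (g, zi) :: 'f ncpoly))" by (rule fin_supp_var)
  have tz: "\<tau> (g, zi) = (g, zi)" using g0 by (simp add: \<tau>_def)
  have "subst \<sigma> (lnc (g, zi) as) \<in> J" using TJ fJ ge by (simp add: T_ideal_def)
  moreover have "subst \<sigma> (lnc (g, zi) as) = F (nc_var (g, zi)) (map \<tau> (ysq as))"
    unfolding \<sigma>_def lnc_F
    using tz by (simp add: subst_ren fin_F[OF finz] R_F[OF finz] R_var)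
  ultimately have sJ: "F (nc_var (g, zi)) (map \<tau> (ysq as)) \<in> J" by simp
  have mt: "map \<tau> (ysq as) = concat (map (\<lambda>i. replicate (as ! i) (0, Suc (\<phi> i))) [0..<m])"
  proof -
    have "(map \<tau> \<circ> (\<lambda>i. replicate (as ! i) (0, Suc i))) i = replicate (as ! i) (0, Suc (\<phi> i))"
      if "i \<in> set [0..<m]" for i
    proof -
      have "i < m" using that by simp
      then have "\<tau> (0, Suc i) = (0, Suc (\<phi> i))" by (simp add: \<tau>_def)
      then show ?thesis by simp
    qed
    then have "map (map \<tau> \<circ> (\<lambda>i. replicate (as ! i) (0, Suc i))) [0..<m]
       = map (\<lambda>i. replicate (as ! i) (0, Suc (\<phi> i))) [0..<m]"
      by (rule map_cong[OF refl])
    then show ?thesis unfolding ysq_def map_concat m_def[symmetric] map_map by (rule arg_cong)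
  qed
  have sub: "mset (map \<tau> (ysq as)) \<subseteq># mset (ysq bs)"
  proof (rule mset_subset_eqI)
    fix x
    have R: "count (mset (ysq bs)) x = (\<Sum>j<length bs. if (0, Suc j) = x then bs ! j else 0)"
      unfolding ysq_def by (rule count_cr)
    have L: "count (mset (map \<tau> (ysq as))) x = (\<Sum>i<m. if (0, Suc (\<phi> i)) = x then as ! i else 0)"
      unfolding mt by (rule count_cr)
    show "count (mset (map \<tau> (ysq as))) x \<le> count (mset (ysq bs)) x"
    proof (cases "\<exists>i0<m. x = (0, Suc (\<phi> i0))")
      case True
      then obtain i0 where i0: "i0 < m" "x = (0, Suc (\<phi> i0))" by blast
      have "count (mset (map \<tau> (ysq as))) x = (\<Sum>i<m. if i = i0 then as ! i0 else 0)"
        unfolding L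
      proof (rule sum.cong)
        fix i assume "i \<in> {..<m}"
        then have im: "i < m" by simp
        have "\<phi> i = \<phi> i0 \<longleftrightarrow> i = i0" using inj_onD[OF inj, of i i0] im i0(1) by auto
        then have "((0::nat, Suc (\<phi> i)) = x) = (i = i0)" using i0(2) by simp
        then show "(if (0, Suc (\<phi> i)) = x then as ! i else 0) = (if i = i0 then as ! i0 else 0)"
          by simp
      qed simp
      also have "\<dots> = as ! i0" using i0 by simp
      also have "\<dots> \<le> bs ! (\<phi> i0)" using \<phi>[OF i0(1)] by simp
      also have "\<dots> = (if (0, Suc (\<phi> i0)) = x then bs ! (\<phi> i0) else 0)" using i0 by simp
      also have "\<dots> \<le> (\<Sum>j<length bs. if (0, Suc j) = x then bs ! j else 0)"
        by (rule member_le_sum[of "\<phi> i0" _ "\<lambda>j. if (0, Suc j) = x then bs ! j else 0"])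
           (simp_all add: \<phi>[OF i0(1)])
      finally show ?thesis using R by simp
    next
      case False
      have "count (mset (map \<tau> (ysq as))) x = 0" unfolding L
      proof (rule sum.neutral, rule ballI)
        fix i assume "i \<in> {..<m}"
        then have "(0, Suc (\<phi> i)) \<noteq> x" using False by auto
        then show "(if (0, Suc (\<phi> i)) = x then as ! i else 0) = 0" by simp
      qed
      then show ?thesis by simp
    qed
  qed
  obtain rest where rest: "mset rest = mset (ysq bs) - mset (map \<tau> (ysq as))"
    using ex_mset by blast
  have perm: "mset (ysq bs) = mset (map \<tau> (ysq as) @ rest)"
    using sub rest by (simp add: subset_mset.add_diff_inverse)
  have rset: "set rest \<subseteq> set (ysq bs)"
    using perm by (metis mset_eq_setD set_append sup_ge2)
  have H: "\<And>a b. fst a = 0 \<Longrightarrow> fst b = 0 \<Longrightarrow> nc_br (nc_var a) (nc_var b) \<in> J"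
    using comm_in_UT[OF n0] IJ by blast
  have c1: "cg J (F (nc_var (g, zi)) (ysq bs)) (F (nc_var (g, zi)) (map \<tau> (ysq as) @ rest))"
    by (rule F_perm[OF TJ H n0 z perm]) (auto dest: ysq_fst)
  have "F (F (nc_var (g, zi)) (map \<tau> (ysq as))) rest \<in> J"
  proof (rule F_J[OF TJ sJ], rule ballI)
    fix y assume "y \<in> set rest"
    then have "y \<in> set (ysq bs)" using rset by blast
    then have "fst y = 0" by (rule ysq_fst)
    then show "fst y < n" using n0 by simp
  qed
  then show ?thesis unfolding lnc_F using cg_in[OF TJ c1] by simp
qed

lemma part1:
  fixes n g zi :: nat
  assumes n0: "0 < n" and g0: "0 < g" and gn: "g < n"
    and va: "valid_exp as" and vb: "valid_exp bs" and le: "vle as bs"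
  shows "(lnc (g, zi) bs :: 'f::field ncpoly) \<in> T_gen n ({lnc (g, zi) as} \<union> UT_ids n)"
  unfolding T_gen_def using part1_J[OF n0 g0 gn _ _ va vb le] by blast

lemma emb_vle: "list_emb (\<le>) as bs \<Longrightarrow> vle as bs"
proof (induction rule: list_emb.induct)
  case (list_emb_Nil ys)
  then show ?case by (auto simp: vle_def strict_mono_on_def)
next
  case (list_emb_Cons xs ys y)
  then obtain \<phi> where smo: "strict_mono_on {0..<length xs} \<phi>"
    and \<phi>: "\<forall>i<length xs. \<phi> i < length ys \<and> xs ! i \<le> ys ! (\<phi> i)"
    unfolding vle_def by blast
  have "strict_mono_on {0..<length xs} (\<lambda>i. Suc (\<phi> i))"
    by (rule strict_mono_onI) (use strict_mono_onD[OF smo] in auto)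
  moreover have "\<forall>i<length xs. Suc (\<phi> i) < length (y # ys) \<and> xs ! i \<le> (y # ys) ! Suc (\<phi> i)"
    using \<phi> by simp
  ultimately show ?case unfolding vle_def by blast
next
  case (list_emb_Cons2 x y xs ys)
  then obtain \<phi> where smo: "strict_mono_on {0..<length xs} \<phi>"
    and \<phi>: "\<forall>i<length xs. \<phi> i < length ys \<and> xs ! i \<le> ys ! (\<phi> i)"
    unfolding vle_def by blast
  define \<psi> where "\<psi> i = (if i = 0 then 0 else Suc (\<phi> (i - 1)))" for i
  have "strict_mono_on {0..<length (x # xs)} \<psi>"
  proof (rule strict_mono_onI)
    fix a b assume ab: "a \<in> {0..<length (x # xs)}" "b \<in> {0..<length (x # xs)}" "a < b"
    show "\<psi> a < \<psi> b"
    proof (cases "a = 0")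
      case True then show ?thesis using ab by (simp add: \<psi>_def)
    next
      case False
      then have "\<phi> (a - 1) < \<phi> (b - 1)"
        using ab by (intro strict_mono_onD[OF smo]) auto
      then show ?thesis using False ab by (simp add: \<psi>_def)
    qed
  qed
  moreover have "\<forall>i<length (x # xs). \<psi> i < length (y # ys) \<and> (x # xs) ! i \<le> (y # ys) ! (\<psi> i)"
  proof (intro allI impI)
    fix i assume i: "i < length (x # xs)"
    show "\<psi> i < length (y # ys) \<and> (x # xs) ! i \<le> (y # ys) ! (\<psi> i)"
    proof (cases i)
      case 0 then show ?thesis using list_emb_Cons2 by (simp add: \<psi>_def)
    next
      case (Suc k)
      then have "k < length xs" using i by simp
      then show ?thesis using \<phi> Suc by (simp add: \<psi>_def)
    qed
  qed
  ultimately show ?case unfolding vle_def by blast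
qed

definition goodR :: "('a \<Rightarrow> 'a \<Rightarrow> bool) \<Rightarrow> (nat \<Rightarrow> 'a) \<Rightarrow> bool" where
  "goodR Q s \<longleftrightarrow> (\<exists>i j. i < j \<and> Q (s i) (s j))"

lemma good_chain:
  fixes s :: "nat \<Rightarrow> 'a"
  assumes gd: "\<And>s. goodR Q s"
  shows "\<exists>r. strict_mono r \<and> (\<forall>k. Q (s (r k)) (s (r (Suc k))))"
proof -
  define f :: "nat set \<Rightarrow> nat" where "f X = (if Q (s (Min X)) (s (Max X)) then 0 else 1)" for X
  have "\<exists>Y t. Y \<subseteq> UNIV \<and> infinite Y \<and> t < 2 \<and> (\<forall>x\<in>Y. \<forall>y\<in>Y. x \<noteq> y \<longrightarrow> f {x, y} = t)"
    by (rule Ramsey2) (auto simp: f_def)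
  then obtain Y t where Y: "infinite Y" and t: "t < 2"
    and hom: "\<And>x y. x \<in> Y \<Longrightarrow> y \<in> Y \<Longrightarrow> x \<noteq> y \<Longrightarrow> f {x, y} = t" by blast
  define r where "r = enumerate Y"
  have rm: "i < j \<Longrightarrow> r i < r j" for i j using enumerate_mono[OF _ Y] by (simp add: r_def)
  have rY: "r i \<in> Y" for i using enumerate_in_set[OF Y] by (simp add: r_def)
  have fr: "i < j \<Longrightarrow> f {r i, r j} = (if Q (s (r i)) (s (r j)) then 0 else 1)" for i j
    using rm[of i j] by (simp add: f_def min_def max_def)
  have t0: "t = 0"
  proof (rule ccontr)
    assume "t \<noteq> 0"
    obtain i j where ij: "i < j" "Q (s (r i)) (s (r j))"
      using gd[of "\<lambda>k. s (r k)"] unfolding goodR_def by blast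
    have "f {r i, r j} = t" using hom[OF rY rY] rm[OF ij(1)] by simp
    then show False using fr[OF ij(1)] ij(2) \<open>t \<noteq> 0\<close> by simp
  qed
  have "Q (s (r k)) (s (r (Suc k)))" for k
  proof -
    have "f {r k, r (Suc k)} = t" using hom[OF rY rY] rm[of k "Suc k"] by simp
    then show ?thesis using fr[of k "Suc k"] t0 by (simp split: if_splits)
  qed
  moreover have "strict_mono r" by (rule strict_monoI) (rule rm)
  ultimately show ?thesis by blast
qed

abbreviation E :: "nat list \<Rightarrow> nat list \<Rightarrow> bool" where "E \<equiv> list_emb (\<le>)"

definition badE :: "(nat \<Rightarrow> nat list) \<Rightarrow> bool" where
  "badE s \<longleftrightarrow> (\<forall>i j. i < j \<longrightarrow> \<not> E (s i) (s j))"

primrec mbs :: "nat \<Rightarrow> nat \<Rightarrow> nat list" where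
  "mbs 0 = (SOME g. badE g \<and> (\<forall>h. badE h \<longrightarrow> length (g 0) \<le> length (h 0)))"
| "mbs (Suc k) = (SOME g. (badE g \<and> (\<forall>i\<le>k. g i = mbs k i)) \<and>
      (\<forall>h. (badE h \<and> (\<forall>i\<le>k. h i = mbs k i)) \<longrightarrow> length (g (Suc k)) \<le> length (h (Suc k))))"

lemma mbs_props:
  assumes b0: "badE s0"
  shows "badE (mbs k) \<and> (\<forall>h. badE h \<and> (\<forall>i<k. h i = mbs k i) \<longrightarrow> length (mbs k k) \<le> length (h k))
     \<and> (\<forall>i\<le>k. mbs (Suc k) i = mbs k i)"
proof (induction k)
  case 0
  have "\<exists>g. badE g \<and> (\<forall>h. badE h \<longrightarrow> length (g 0) \<le> length (h 0))"
    using ex_has_least_nat[of badE s0 "\<lambda>g. length (g 0)"] b0 by blast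
  then have A: "badE (mbs 0) \<and> (\<forall>h. badE h \<longrightarrow> length (mbs 0 0) \<le> length (h 0))"
    unfolding mbs.simps by (rule someI_ex)
  have "\<exists>g. (badE g \<and> (\<forall>i\<le>0. g i = mbs 0 i)) \<and>
      (\<forall>h. (badE h \<and> (\<forall>i\<le>0. h i = mbs 0 i)) \<longrightarrow> length (g (Suc 0)) \<le> length (h (Suc 0)))"
    by (rule ex_has_least_nat[of _ "mbs 0"]) (use A in simp)
  then have "(badE (mbs (Suc 0)) \<and> (\<forall>i\<le>0. mbs (Suc 0) i = mbs 0 i)) \<and> (\<forall>h. (badE h \<and> (\<forall>i\<le>0. h i = mbs 0 i)) \<longrightarrow> length (mbs (Suc 0) (Suc 0)) \<le> length (h (Suc 0)))"
    unfolding mbs.simps(2)[of 0] by (rule someI_ex)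
  then show ?case using A by blast
next
  case (Suc k)
  have ex1: "\<exists>g. (badE g \<and> (\<forall>i\<le>k. g i = mbs k i)) \<and>
      (\<forall>h. (badE h \<and> (\<forall>i\<le>k. h i = mbs k i)) \<longrightarrow> length (g (Suc k)) \<le> length (h (Suc k)))"
    by (rule ex_has_least_nat[of _ "mbs k"]) (use Suc.IH in simp)
  then have A: "(badE (mbs (Suc k)) \<and> (\<forall>i\<le>k. mbs (Suc k) i = mbs k i)) \<and>
      (\<forall>h. (badE h \<and> (\<forall>i\<le>k. h i = mbs k i)) \<longrightarrow> length (mbs (Suc k) (Suc k)) \<le> length (h (Suc k)))"
    unfolding mbs.simps(2)[of k] by (rule someI_ex)
  have ex2: "\<exists>g. (badE g \<and> (\<forall>i\<le>Suc k. g i = mbs (Suc k) i)) \<and>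
      (\<forall>h. (badE h \<and> (\<forall>i\<le>Suc k. h i = mbs (Suc k) i)) \<longrightarrow> length (g (Suc (Suc k))) \<le> length (h (Suc (Suc k))))"
    by (rule ex_has_least_nat[of _ "mbs (Suc k)"]) (use A in simp)
  then have B: "(badE (mbs (Suc (Suc k))) \<and> (\<forall>i\<le>Suc k. mbs (Suc (Suc k)) i = mbs (Suc k) i)) \<and>
      (\<forall>h. (badE h \<and> (\<forall>i\<le>Suc k. h i = mbs (Suc k) i)) \<longrightarrow> length (mbs (Suc (Suc k)) (Suc (Suc k))) \<le> length (h (Suc (Suc k))))"
    unfolding mbs.simps(2)[of "Suc k"] by (rule someI_ex)
  have min: "\<forall>h. badE h \<and> (\<forall>i<Suc k. h i = mbs (Suc k) i) \<longrightarrow> length (mbs (Suc k) (Suc k)) \<le> length (h (Suc k))"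
  proof (intro allI impI)
    fix h assume h: "badE h \<and> (\<forall>i<Suc k. h i = mbs (Suc k) i)"
    then have "\<forall>i\<le>k. h i = mbs k i" using A by auto
    then show "length (mbs (Suc k) (Suc k)) \<le> length (h (Suc k))" using A h by blast
  qed
  show ?case using A B min by blast
qed

lemma higman: "goodR E s"
proof (rule ccontr)
  assume "\<not> goodR E s"
  then have b0: "badE s" by (auto simp: goodR_def badE_def)
  define m where "m k = mbs k k" for k
  have agree: "i \<le> k \<Longrightarrow> mbs k i = m i" for i k
  proof (induction k)
    case 0 then show ?case by (simp add: m_def)
  next
    case (Suc k)
    show ?case
    proof (cases "i = Suc k")
      case True then show ?thesis by (simp add: m_def)
    next
      case False
      then have "i \<le> k" using Suc.prems by simp
      have "mbs (Suc k) i = mbs k i" using mbs_props[OF b0, of k] \<open>i \<le> k\<close> by blast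
      then show ?thesis using Suc.IH[OF \<open>i \<le> k\<close>] by simp
    qed
  qed
  have mbad: "badE m"
    unfolding badE_def
  proof (intro allI impI)
    fix i j :: nat assume ij: "i < j"
    have "badE (mbs j)" using mbs_props[OF b0] by blast
    then have "\<not> E (mbs j i) (mbs j j)" using ij by (simp add: badE_def)
    then show "\<not> E (m i) (m j)" using agree[of i j] ij by (simp add: m_def)
  qed
  have mmin: "length (m k) \<le> length (h k)" if hb: "badE h" and hk: "\<forall>i<k. h i = m i" for h k
  proof -
    have "\<forall>i<k. h i = mbs k i"
    proof (intro allI impI)
      fix i assume "i < k"
      then show "h i = mbs k i" using hk agree[of i k] by simp
    qed
    then have "length (mbs k k) \<le> length (h k)" using mbs_props[OF b0, of k] hb by blast
    then show ?thesis by (simp add: m_def)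
  qed
  have ne: "m k \<noteq> []" for k
  proof
    assume "m k = []"
    then have "E (m k) (m (Suc k))" by simp
    then show False using mbad by (simp add: badE_def)
  qed
  define x where "x k = hd (m k)" for k
  define t where "t k = tl (m k)" for k
  have mxt: "m k = x k # t k" for k using ne[of k] by (simp add: x_def t_def)
  have "goodR (\<le>) y" for y :: "nat \<Rightarrow> nat"
  proof -
    obtain i where i: "\<forall>k. y i \<le> y k" using ex_has_least_nat[of "\<lambda>_. True" 0 y] by blast
    then show ?thesis unfolding goodR_def by (intro exI[of _ i] exI[of _ "Suc i"]) simp
  qed
  then obtain r where r: "strict_mono r" and rx: "\<forall>k. x (r k) \<le> x (r (Suc k))"
    using good_chain[of "(\<le>)" x] by blast
  have xle: "a \<le> b \<Longrightarrow> x (r a) \<le> x (r b)" for a b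
    using lift_Suc_mono_le[of "\<lambda>k. x (r k)"] rx by blast
  have rle: "a < b \<Longrightarrow> r a < r b" for a b using r by (simp add: strict_mono_def)
  have r0: "r 0 \<le> r a" for a using r by (simp add: strict_mono_less_eq)
  define k0 where "k0 = r 0"
  define g where "g i = (if i < k0 then m i else t (r (i - k0)))" for i
  have gbad: "badE g"
    unfolding badE_def
  proof (intro allI impI notI)
    fix i j :: nat assume ij: "i < j" and e: "E (g i) (g j)"
    show False
    proof (cases "j < k0")
      case True
      then have "E (m i) (m j)" using e ij by (simp add: g_def)
      then show False using mbad ij by (simp add: badE_def)
    next
      case jk: False
      show False
      proof (cases "i < k0")
        case True
        then have "E (m i) (t (r (j - k0)))" using e jk by (simp add: g_def)
        then have "E (m i) (m (r (j - k0)))" by (simp add: mxt[of "r (j - k0)"] list_emb_Cons)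
        moreover have "i < r (j - k0)" using True r0[of "j - k0"] by (simp add: k0_def)
        ultimately show False using mbad by (simp add: badE_def)
      next
        case False
        then have "E (t (r (i - k0))) (t (r (j - k0)))" using e jk by (simp add: g_def)
        moreover have ab: "i - k0 < j - k0" using ij False by simp
        ultimately have "E (x (r (i - k0)) # t (r (i - k0))) (x (r (j - k0)) # t (r (j - k0)))"
          using xle[of "i - k0" "j - k0"] by (intro list_emb_Cons2) simp_all
        then have "E (m (r (i - k0))) (m (r (j - k0)))" by (simp add: mxt)
        then show False using mbad rle[OF ab] by (simp add: badE_def)
      qed
    qed
  qed
  have "length (m k0) \<le> length (g k0)"
    by (rule mmin[OF gbad]) (simp add: g_def)
  also have "g k0 = t k0" by (simp add: g_def k0_def)
  finally show False using mxt[of k0] by simp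
qed

lemma part2:
  fixes s :: "nat \<Rightarrow> nat list"
  assumes "\<forall>k. valid_exp (s k)"
  shows "\<exists>r. strict_mono r \<and> (\<forall>k. vle (s (r k)) (s (r (Suc k))))"
proof -
  obtain r where "strict_mono r" "\<forall>k. E (s (r k)) (s (r (Suc k)))"
    using good_chain[of E s] higman by blast
  then show ?thesis using emb_vle by blast
qed

primrec chosen :: "nat list set \<Rightarrow> nat \<Rightarrow> nat list list" where
  "chosen X 0 = []"
| "chosen X (Suc k) = chosen X k @ [SOME b. b \<in> X \<and> (\<forall>a\<in>set (chosen X k). \<not> E a b)]"

declare chosen.simps[simp del]

lemma chosen_props:
  assumes nb: "\<And>F. finite F \<Longrightarrow> F \<subseteq> X \<Longrightarrow> \<exists>b\<in>X. \<forall>a\<in>F. \<not> E a b"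
  shows "length (chosen X k) = k \<and> set (chosen X k) \<subseteq> X \<and>
     (\<forall>i j. i < j \<and> j < k \<longrightarrow> \<not> E (chosen X k ! i) (chosen X k ! j))"
proof (induction k)
  case 0 then show ?case by (simp add: chosen.simps(1))
next
  case (Suc k)
  let ?L = "chosen X k"
  define c where "c = (SOME b. b \<in> X \<and> (\<forall>a\<in>set ?L. \<not> E a b))"
  have "\<exists>b. b \<in> X \<and> (\<forall>a\<in>set ?L. \<not> E a b)" using nb[of "set ?L"] Suc.IH by blast
  then have "c \<in> X \<and> (\<forall>a\<in>set ?L. \<not> E a c)" unfolding c_def by (rule someI_ex)
  then have c: "c \<in> X" "\<forall>a\<in>set ?L. \<not> E a c" by blast+
  have ch: "chosen X (Suc k) = ?L @ [c]" by (simp only: c_def chosen.simps(2))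
  have len: "length ?L = k" using Suc.IH by blast
  have pairs: "\<not> E ((?L @ [c]) ! i) ((?L @ [c]) ! j)" if ij: "i < j" "j < Suc k" for i j
  proof (cases "j < k")
    case True
    then show ?thesis using Suc.IH ij len by (simp add: nth_append)
  next
    case False
    then have j: "j = k" using ij by simp
    have "(?L @ [c]) ! i = ?L ! i" using ij j len by (simp add: nth_append)
    moreover have "?L ! i \<in> set ?L" using ij j len by simp
    moreover have "(?L @ [c]) ! j = c" using j len by (simp add: nth_append)
    ultimately show ?thesis using c by simp
  qed
  have "length (?L @ [c]) = Suc k" using len by simp
  moreover have "set (?L @ [c]) \<subseteq> X" using Suc.IH c by simp
  moreover have "\<forall>i j. i < j \<and> j < Suc k \<longrightarrow> \<not> E ((?L @ [c]) ! i) ((?L @ [c]) ! j)"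
    using pairs by blast
  ultimately show ?case unfolding ch by blast
qed

lemma chosen_len: "length (chosen X k) = k"
  by (induction k) (simp_all add: chosen.simps)

lemma chosen_prefix:
  "i < k \<Longrightarrow> chosen X k ! i = chosen X (Suc i) ! i"
proof (induction k)
  case 0 then show ?case by simp
next
  case (Suc k)
  show ?case
  proof (cases "i < k")
    case True
    have "chosen X (Suc k) ! i = chosen X k ! i"
      by (simp only: chosen.simps(2)) (rule nth_append_left, simp only: chosen_len True)
    then show ?thesis using Suc.IH True by simp
  next
    case False
    then have "i = k" using Suc.prems by simp
    then show ?thesis by (simp only:)
  qed
qed

lemma finite_basis:
  fixes X :: "nat list set"
  shows "\<exists>F. finite F \<and> F \<subseteq> X \<and> (\<forall>b\<in>X. \<exists>a\<in>F. E a b)"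
proof (rule ccontr)
  assume "\<not> ?thesis"
  then have neg: "\<And>F. finite F \<Longrightarrow> F \<subseteq> X \<Longrightarrow> \<not> (\<forall>b\<in>X. \<exists>a\<in>F. E a b)" by blast
  have nb: "\<exists>b\<in>X. \<forall>a\<in>F. \<not> E a b" if "finite F" "F \<subseteq> X" for F
  proof (rule ccontr)
    assume "\<not> (\<exists>b\<in>X. \<forall>a\<in>F. \<not> E a b)"
    then have "\<forall>b\<in>X. \<exists>a\<in>F. E a b" by blast
    then show False using neg[OF that] by blast
  qed
  define s where "s i = chosen X (Suc i) ! i" for i
  have "goodR E s" by (rule higman)
  then obtain i j where ij: "i < j" "E (s i) (s j)" unfolding goodR_def by blast
  have "s i = chosen X (Suc j) ! i" using chosen_prefix[of i "Suc j" X] ij(1) by (simp add: s_def)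
  moreover have "s j = chosen X (Suc j) ! j" by (simp add: s_def)
  moreover have "\<not> E (chosen X (Suc j) ! i) (chosen X (Suc j) ! j)"
    using chosen_props[OF nb, of "Suc j"] ij(1) by blast
  ultimately show False using ij(2) by simp
qed

lemma T_gen_least: "T_ideal n K \<Longrightarrow> S \<subseteq> K \<Longrightarrow> T_gen n S \<subseteq> K"
  unfolding T_gen_def by blast

lemma T_gen_glb: "(\<And>K. T_ideal n K \<Longrightarrow> S' \<subseteq> K \<Longrightarrow> T_gen n S \<subseteq> K) \<Longrightarrow> T_gen n S \<subseteq> T_gen n S'"
  unfolding T_gen_def by blast

lemma T_gen_mono: "S \<subseteq> S' \<Longrightarrow> T_gen n S \<subseteq> T_gen n S'"
  unfolding T_gen_def by blast

lemma part3:
  fixes n g zi :: nat and J :: "'f::field ncpoly set"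
  assumes n0: "0 < n" and g0: "0 < g" and gn: "g < n"
    and TJ: "T_ideal n J" and IJ: "UT_ids n \<subseteq> J"
  shows "\<exists>A'. finite A' \<and> A' \<subseteq> J \<inter> B_set (g, zi) \<and>
           T_gen n ((J \<inter> B_set (g, zi)) \<union> UT_ids n) = T_gen n (A' \<union> UT_ids n)"
proof -
  define X where "X = {as. valid_exp as \<and> (lnc (g, zi) as :: 'f ncpoly) \<in> J}"
  obtain F where F: "finite F" "F \<subseteq> X" and basis: "\<forall>b\<in>X. \<exists>a\<in>F. E a b"
    using finite_basis[of X] by blast
  define A' where "A' = (\<lambda>as. lnc (g, zi) as :: 'f ncpoly) ` F"
  have fin: "finite A'" using F(1) by (simp add: A'_def)
  have sub: "A' \<subseteq> J \<inter> B_set (g, zi)"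
  proof
    fix x assume "x \<in> A'"
    then obtain as where as: "as \<in> F" "x = lnc (g, zi) as" unfolding A'_def by blast
    then have "as \<in> X" using F(2) by blast
    then have "valid_exp as" "lnc (g, zi) as \<in> J" unfolding X_def by blast+
    then show "x \<in> J \<inter> B_set (g, zi)" using as(2) unfolding B_set_def by blast
  qed
  have "T_gen n ((J \<inter> B_set (g, zi)) \<union> UT_ids n) \<subseteq> T_gen n (A' \<union> UT_ids n)"
  proof (rule T_gen_glb)
    fix K assume TK: "T_ideal n K" and K: "A' \<union> UT_ids n \<subseteq> K"
    then have IK: "UT_ids n \<subseteq> K" and AK: "A' \<subseteq> K" by auto
    have "(J \<inter> B_set (g, zi)) \<union> UT_ids n \<subseteq> K"
    proof
      fix h assume "h \<in> (J \<inter> B_set (g, zi)) \<union> UT_ids n"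
      then consider "h \<in> UT_ids n" | "h \<in> J" "h \<in> B_set (g, zi)" by blast
      then show "h \<in> K"
      proof cases
        case 1 then show ?thesis using IK by blast
      next
        case 2
        then obtain bs where bs: "h = lnc (g, zi) bs" "valid_exp bs" unfolding B_set_def by blast
        then have "bs \<in> X" using 2 unfolding X_def by blast
        then obtain a where a: "a \<in> F" "E a bs" using basis by blast
        have "a \<in> X" using a(1) F(2) by blast
        then have va: "valid_exp a" unfolding X_def by blast
        have "lnc (g, zi) a \<in> A'" using a(1) unfolding A'_def by blast
        then have "lnc (g, zi) a \<in> K" using AK by blast
        then show ?thesis
          using part1_J[OF n0 g0 gn TK IK va bs(2) emb_vle[OF a(2)]] bs(1) by simp
      qed
    qed
    then show "T_gen n ((J \<inter> B_set (g, zi)) \<union> UT_ids n) \<subseteq> K"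
      using TK by (rule T_gen_least[rotated])
  qed
  moreover have "T_gen n (A' \<union> UT_ids n) \<subseteq> T_gen n ((J \<inter> B_set (g, zi)) \<union> UT_ids n)"
    by (rule T_gen_mono) (use sub in blast)
  ultimately show ?thesis using fin sub by blast
qed

theorem mainTheorem11:
  fixes n g zi :: nat
  assumes inf: "infinite (UNIV :: 'f::field set)"
    and n2: "2 \<le> n" and g0: "0 < g" and gn: "g < n"
  shows
    "(\<forall>as bs. valid_exp as \<longrightarrow> valid_exp bs \<longrightarrow> vle as bs \<longrightarrow>
        (lnc (g, zi) bs :: 'f ncpoly) \<in> T_gen n ({lnc (g, zi) as} \<union> UT_ids n))
   \<and> (\<forall>s :: nat \<Rightarrow> nat list. (\<forall>k. valid_exp (s k)) \<longrightarrow>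
        (\<exists>r. strict_mono r \<and> (\<forall>k. vle (s (r k)) (s (r (Suc k))))))
   \<and> (\<forall>J :: 'f ncpoly set. T_ideal n J \<longrightarrow> UT_ids n \<subseteq> J \<longrightarrow>
        (\<exists>A'. finite A' \<and> A' \<subseteq> J \<inter> B_set (g, zi) \<and>
           T_gen n ((J \<inter> B_set (g, zi)) \<union> UT_ids n) = T_gen n (A' \<union> UT_ids n)))"
proof -
  have n0: "0 < n" using n2 by simp
  show ?thesis
  proof (intro conjI allI impI)
    fix as bs assume "valid_exp as" "valid_exp bs" "vle as bs"
    then show "(lnc (g, zi) bs :: 'f ncpoly) \<in> T_gen n ({lnc (g, zi) as} \<union> UT_ids n)"
      by (rule part1[OF n0 g0 gn])
  next
    fix s :: "nat \<Rightarrow> nat list" assume "\<forall>k. valid_exp (s k)"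
    then show "\<exists>r. strict_mono r \<and> (\<forall>k. vle (s (r k)) (s (r (Suc k))))" by (rule part2)
  next
    fix J :: "'f ncpoly set" assume "T_ideal n J" "UT_ids n \<subseteq> J"
    then show "\<exists>A'. finite A' \<and> A' \<subseteq> J \<inter> B_set (g, zi) \<and>
           T_gen n ((J \<inter> B_set (g, zi)) \<union> UT_ids n) = T_gen n (A' \<union> UT_ids n)"
      by (rule part3[OF n0 g0 gn])
  qed
qed

end
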